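(* Let $n\geq 3$ and $k\geq 2$ be integers. Then $$\Phi_k (P_n^2)=\frac{1}{8}\left( k^{n^2} -k^{\lceil \frac{n^2}{2}\rceil} - 2k^{n\lceil\frac{n}{2}\rceil}-2k^{\frac{n(n+1)}{2} } +2k^{\lceil \frac{n}{2}\rceil^2}+2k^{\lceil \frac{n}{2}\rceil \lceil \frac{n+1}{2}\rceil}\right).$$
   Context: $P_n$ is the path on $n$ vertices and $P_n^2=P_n\square P_n$ is the Cartesian product ($V(G\square H)=V(G)\times V(H)$, $(g,h)\sim(g',h')$ iff $g=g'$ and $hh'\in E(H)$, or $gg'\in E(G)$ and $h=h'$), i.e. the $n\times n$ grid. A vertex coloring is distinguishing if the identity is the only automorphism preserving it. Two colorings $c_1,c_2$ of a graph $G$ are equivalent if there is an automorphism $\alpha$ of $G$ with $c_1(v)=c_2(\alpha(v))$ for all $v\in V(G)$. $\Phi_k(G)$ denotes the number of non-equivalent distinguishing vertex colorings of $G$ with colors from $\{1,\ldots,k\}$ (not all colors need be used). *)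

theory Defs
  imports Complex_Main "HOL-Library.FuncSet"
begin

definition path_V :: "nat \<Rightarrow> nat set" where
  "path_V n = {0..<n}"

definition path_E :: "nat \<Rightarrow> nat \<Rightarrow> bool" where
  "path_E x y \<longleftrightarrow> x + 1 = y \<or> y + 1 = x"

definition cart_E :: "('a \<Rightarrow> 'a \<Rightarrow> bool) \<Rightarrow> ('b \<Rightarrow> 'b \<Rightarrow> bool)
    \<Rightarrow> ('a \<times> 'b) \<Rightarrow> ('a \<times> 'b) \<Rightarrow> bool" where
  "cart_E E F u v \<longleftrightarrow>
     (fst u = fst v \<and> F (snd u) (snd v)) \<or> (E (fst u) (fst v) \<and> snd u = snd v)"

definition grid_V :: "nat \<Rightarrow> (nat \<times> nat) set" where
  "grid_V n = path_V n \<times> path_V n"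

definition grid_E :: "(nat \<times> nat) \<Rightarrow> (nat \<times> nat) \<Rightarrow> bool" where
  "grid_E = cart_E path_E path_E"

definition is_aut :: "'a set \<Rightarrow> ('a \<Rightarrow> 'a \<Rightarrow> bool) \<Rightarrow> ('a \<Rightarrow> 'a) \<Rightarrow> bool" where
  "is_aut V E \<sigma> \<longleftrightarrow> bij_betw \<sigma> V V \<and> (\<forall>u\<in>V. \<forall>v\<in>V. E u v \<longleftrightarrow> E (\<sigma> u) (\<sigma> v))"

definition distinguishing :: "'a set \<Rightarrow> ('a \<Rightarrow> 'a \<Rightarrow> bool) \<Rightarrow> ('a \<Rightarrow> 'c) \<Rightarrow> bool" where
  "distinguishing V E c \<longleftrightarrow>
     (\<forall>\<sigma>. is_aut V E \<sigma> \<and> (\<forall>v\<in>V. c (\<sigma> v) = c v) \<longrightarrow> (\<forall>v\<in>V. \<sigma> v = v))"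

definition equiv_col :: "'a set \<Rightarrow> ('a \<Rightarrow> 'a \<Rightarrow> bool) \<Rightarrow> ('a \<Rightarrow> 'c) \<Rightarrow> ('a \<Rightarrow> 'c) \<Rightarrow> bool" where
  "equiv_col V E c1 c2 \<longleftrightarrow> (\<exists>\<alpha>. is_aut V E \<alpha> \<and> (\<forall>v\<in>V. c1 v = c2 (\<alpha> v)))"

definition dist_cols :: "'a set \<Rightarrow> ('a \<Rightarrow> 'a \<Rightarrow> bool) \<Rightarrow> nat \<Rightarrow> ('a \<Rightarrow> nat) set" where
  "dist_cols V E k = {c \<in> V \<rightarrow>\<^sub>E {1..k}. distinguishing V E c}"

definition Phi :: "nat \<Rightarrow> 'a set \<Rightarrow> ('a \<Rightarrow> 'a \<Rightarrow> bool) \<Rightarrow> nat" where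
  "Phi k V E = card (dist_cols V E k //
      {(c1, c2). c1 \<in> dist_cols V E k \<and> c2 \<in> dist_cols V E k \<and> equiv_col V E c1 c2})"

end

theory Submission
  imports Defs
begin

definition Aut :: "'a set \<Rightarrow> ('a \<Rightarrow> 'a \<Rightarrow> bool) \<Rightarrow> ('a \<Rightarrow> 'a) set" where
  "Aut V E = {\<sigma> \<in> V \<rightarrow>\<^sub>E V. is_aut V E \<sigma>}"

lemma is_aut_comp:
  assumes "is_aut V E \<sigma>" "is_aut V E \<tau>" shows "is_aut V E (\<sigma> \<circ> \<tau>)"
proof -
  have "bij_betw (\<sigma> \<circ> \<tau>) V V" using assms unfolding is_aut_def by (auto intro: bij_betw_trans)
  moreover have "E u v \<longleftrightarrow> E ((\<sigma> \<circ> \<tau>) u) ((\<sigma> \<circ> \<tau>) v)" if "u \<in> V" "v \<in> V" for u v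
  proof -
    have "\<tau> u \<in> V" "\<tau> v \<in> V" using assms that unfolding is_aut_def by (auto dest: bij_betw_apply)
    then show ?thesis using assms that unfolding is_aut_def by auto
  qed
  ultimately show ?thesis unfolding is_aut_def by auto
qed

lemma is_aut_inv:
  assumes "is_aut V E \<sigma>" shows "is_aut V E (inv_into V \<sigma>)"
proof -
  have b: "bij_betw \<sigma> V V" and e: "\<forall>u\<in>V. \<forall>v\<in>V. E u v \<longleftrightarrow> E (\<sigma> u) (\<sigma> v)"
    using assms unfolding is_aut_def by auto
  have "bij_betw (inv_into V \<sigma>) V V" using b by (rule bij_betw_inv_into)
  moreover have "E u v \<longleftrightarrow> E (inv_into V \<sigma> u) (inv_into V \<sigma> v)" if "u \<in> V" "v \<in> V" for u v
  proof -
    have "inv_into V \<sigma> u \<in> V" "inv_into V \<sigma> v \<in> V"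
      using b that by (metis bij_betw_apply bij_betw_inv_into)+
    moreover have "\<sigma> (inv_into V \<sigma> u) = u" "\<sigma> (inv_into V \<sigma> v) = v"
      using b that by (metis bij_betw_inv_into_right)+
    ultimately show ?thesis using e by metis
  qed
  ultimately show ?thesis unfolding is_aut_def by auto
qed

lemma is_aut_cong:
  assumes "is_aut V E \<sigma>" "\<forall>x\<in>V. \<tau> x = \<sigma> x" shows "is_aut V E \<tau>"
proof -
  have "bij_betw \<tau> V V" using assms unfolding is_aut_def
    using bij_betw_cong by fastforce
  then show ?thesis using assms unfolding is_aut_def by auto
qed

lemma is_aut_id: "is_aut V E id"
  unfolding is_aut_def by auto

lemma is_aut_bij: "is_aut V E \<sigma> \<Longrightarrow> bij_betw \<sigma> V V"
  unfolding is_aut_def by auto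

lemma is_aut_in: "is_aut V E \<sigma> \<Longrightarrow> x \<in> V \<Longrightarrow> \<sigma> x \<in> V"
  unfolding is_aut_def by (auto dest: bij_betw_apply)

lemma is_aut_E: "is_aut V E \<sigma> \<Longrightarrow> u \<in> V \<Longrightarrow> v \<in> V \<Longrightarrow> E (\<sigma> u) (\<sigma> v) = E u v"
  unfolding is_aut_def by auto

lemma is_aut_inj: "is_aut V E \<sigma> \<Longrightarrow> inj_on \<sigma> V"
  unfolding is_aut_def by (auto simp: bij_betw_def)

lemma dist_comp:
  assumes d: "distinguishing V E c" and a: "is_aut V E \<alpha>"
  shows "distinguishing V E (\<lambda>v. c (\<alpha> v))"
  unfolding distinguishing_def
proof (intro allI impI ballI)
  fix \<sigma> v assume h: "is_aut V E \<sigma> \<and> (\<forall>v\<in>V. c (\<alpha> (\<sigma> v)) = c (\<alpha> v))" and v: "v \<in> V"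
  define \<beta> where "\<beta> = inv_into V \<alpha>"
  have ab: "is_aut V E \<beta>" unfolding \<beta>_def using a by (rule is_aut_inv)
  have t: "is_aut V E (\<alpha> \<circ> \<sigma> \<circ> \<beta>)" using a h ab by (metis is_aut_comp)
  have bij: "bij_betw \<alpha> V V" using a by (rule is_aut_bij)
  have "\<forall>w\<in>V. c ((\<alpha> \<circ> \<sigma> \<circ> \<beta>) w) = c w"
  proof
    fix w assume w: "w \<in> V"
    have "\<beta> w \<in> V" using ab w by (rule is_aut_in)
    moreover have "\<alpha> (\<beta> w) = w" unfolding \<beta>_def using bij w by (metis bij_betw_inv_into_right)
    ultimately show "c ((\<alpha> \<circ> \<sigma> \<circ> \<beta>) w) = c w" using h by (metis comp_apply)
  qed
  then have fx: "\<forall>w\<in>V. (\<alpha> \<circ> \<sigma> \<circ> \<beta>) w = w" using d t unfolding distinguishing_def by blast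
  have "\<alpha> v \<in> V" using a v by (rule is_aut_in)
  moreover have "\<beta> (\<alpha> v) = v" unfolding \<beta>_def using bij v by (metis bij_betw_inv_into_left)
  ultimately have "\<alpha> (\<sigma> v) = \<alpha> v" using fx by (metis comp_apply)
  moreover have "\<sigma> v \<in> V" using h v is_aut_in by metis
  ultimately show "\<sigma> v = v" using is_aut_inj[OF a] v by (meson inj_onD)
qed

lemma dist_cong:
  assumes "distinguishing V E c" "\<forall>v\<in>V. c' v = c v" shows "distinguishing V E c'"
  using assms unfolding distinguishing_def by (metis is_aut_in)

definition rel where
  "rel V E k = {(c1, c2). c1 \<in> dist_cols V E k \<and> c2 \<in> dist_cols V E k \<and> equiv_col V E c1 c2}"

lemma equiv_rel: "equiv (dist_cols V E k) (rel V E k)"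
proof (rule equivI)
  show "rel V E k \<subseteq> dist_cols V E k \<times> dist_cols V E k" unfolding rel_def by auto
  show "refl_on (dist_cols V E k) (rel V E k)"
    unfolding refl_on_def rel_def equiv_col_def using is_aut_id[of V E]
    by (auto simp: dist_cols_def intro!: exI[of _ id])
  show "sym (rel V E k)"
  proof (rule symI)
    fix a b assume "(a, b) \<in> rel V E k"
    then obtain \<alpha> where ab: "a \<in> dist_cols V E k" "b \<in> dist_cols V E k" "is_aut V E \<alpha>"
      "\<forall>v\<in>V. a v = b (\<alpha> v)" unfolding rel_def equiv_col_def by auto
    have "is_aut V E (inv_into V \<alpha>)" using ab by (simp add: is_aut_inv)
    moreover have "\<forall>v\<in>V. b v = a (inv_into V \<alpha> v)"
    proof
      fix v assume v: "v \<in> V"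
      have "inv_into V \<alpha> v \<in> V" using calculation v by (rule is_aut_in)
      moreover have "\<alpha> (inv_into V \<alpha> v) = v" using is_aut_bij[OF ab(3)] v
        by (metis bij_betw_inv_into_right)
      ultimately show "b v = a (inv_into V \<alpha> v)" using ab by metis
    qed
    ultimately show "(b, a) \<in> rel V E k" using ab unfolding rel_def equiv_col_def by auto
  qed
  show "trans (rel V E k)"
  proof (rule transI)
    fix a b c assume "(a, b) \<in> rel V E k" "(b, c) \<in> rel V E k"
    then obtain \<alpha> \<beta> where ab: "a \<in> dist_cols V E k" "c \<in> dist_cols V E k" "is_aut V E \<alpha>"
      "\<forall>v\<in>V. a v = b (\<alpha> v)" "is_aut V E \<beta>" "\<forall>v\<in>V. b v = c (\<beta> v)"
      unfolding rel_def equiv_col_def by auto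
    have "is_aut V E (\<beta> \<circ> \<alpha>)" using ab by (simp add: is_aut_comp)
    moreover have "\<forall>v\<in>V. a v = c ((\<beta> \<circ> \<alpha>) v)" using ab is_aut_in by fastforce
    ultimately show "(a, c) \<in> rel V E k" using ab unfolding rel_def equiv_col_def by auto
  qed
qed

lemma Aut_comp: "\<alpha> \<in> Aut V E \<Longrightarrow> \<beta> \<in> Aut V E \<Longrightarrow> restrict (\<alpha> \<circ> \<beta>) V \<in> Aut V E"
  unfolding Aut_def using is_aut_comp is_aut_cong is_aut_in
  by (smt (verit) PiE_iff comp_apply mem_Collect_eq restrict_PiE_iff restrict_apply')

lemma class_eq:
  assumes c: "c \<in> dist_cols V E k"
  shows "rel V E k `` {c} = (\<lambda>\<alpha>. restrict (c \<circ> \<alpha>) V) ` Aut V E"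
proof
  show "rel V E k `` {c} \<subseteq> (\<lambda>\<alpha>. restrict (c \<circ> \<alpha>) V) ` Aut V E"
  proof
    fix c1 assume "c1 \<in> rel V E k `` {c}"
    then have "(c1, c) \<in> rel V E k" using equiv_rel[of V E k] unfolding equiv_def sym_def by blast
    then obtain \<alpha> where h: "c1 \<in> dist_cols V E k" "is_aut V E \<alpha>" "\<forall>v\<in>V. c1 v = c (\<alpha> v)"
      unfolding rel_def equiv_col_def by auto
    have "restrict \<alpha> V \<in> Aut V E" unfolding Aut_def using h(2)
      by (auto intro: is_aut_cong is_aut_in)
    moreover have "c1 = restrict (c \<circ> restrict \<alpha> V) V"
    proof
      fix v show "c1 v = restrict (c \<circ> restrict \<alpha> V) V v"
        using h(1,3) unfolding dist_cols_def by (cases "v \<in> V") (auto simp: PiE_def extensional_def)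
    qed
    ultimately show "c1 \<in> (\<lambda>\<alpha>. restrict (c \<circ> \<alpha>) V) ` Aut V E" by blast
  qed
  show "(\<lambda>\<alpha>. restrict (c \<circ> \<alpha>) V) ` Aut V E \<subseteq> rel V E k `` {c}"
  proof
    fix c1 assume "c1 \<in> (\<lambda>\<alpha>. restrict (c \<circ> \<alpha>) V) ` Aut V E"
    then obtain \<alpha> where a: "\<alpha> \<in> Aut V E" and c1: "c1 = restrict (c \<circ> \<alpha>) V" by auto
    have ia: "is_aut V E \<alpha>" using a unfolding Aut_def by auto
    have d: "distinguishing V E c" "c \<in> V \<rightarrow>\<^sub>E {1..k}" using c unfolding dist_cols_def by auto
    have "distinguishing V E (\<lambda>v. c (\<alpha> v))" using d(1) ia by (rule dist_comp)
    then have "distinguishing V E c1" using c1 by (auto intro: dist_cong)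
    moreover have "c1 \<in> V \<rightarrow>\<^sub>E {1..k}" using c1 d(2) ia is_aut_in by fastforce
    ultimately have "c1 \<in> dist_cols V E k" unfolding dist_cols_def by auto
    then have "(c1, c) \<in> rel V E k" using c ia c1 unfolding rel_def equiv_col_def by auto
    then show "c1 \<in> rel V E k `` {c}" using equiv_rel[of V E k] unfolding equiv_def sym_def by blast
  qed
qed

lemma class_card:
  assumes c: "c \<in> dist_cols V E k"
  shows "card (rel V E k `` {c}) = card (Aut V E)"
proof -
  have "inj_on (\<lambda>\<alpha>. restrict (c \<circ> \<alpha>) V) (Aut V E)"
  proof (rule inj_onI)
    fix \<alpha> \<beta> assume a: "\<alpha> \<in> Aut V E" and b: "\<beta> \<in> Aut V E"
      and eq: "restrict (c \<circ> \<alpha>) V = restrict (c \<circ> \<beta>) V"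
    have ia: "is_aut V E \<alpha>" and ib: "is_aut V E \<beta>" using a b unfolding Aut_def by auto
    have ext: "\<alpha> \<in> extensional V" "\<beta> \<in> extensional V" using a b unfolding Aut_def by (auto simp: PiE_def)
    have cv: "\<forall>v\<in>V. c (\<alpha> v) = c (\<beta> v)" using eq by (metis comp_apply restrict_apply')
    define \<gamma> where "\<gamma> = \<alpha> \<circ> inv_into V \<beta>"
    have ig: "is_aut V E \<gamma>" unfolding \<gamma>_def using ia ib by (simp add: is_aut_comp is_aut_inv)
    have binv: "\<And>w. w \<in> V \<Longrightarrow> \<beta> (inv_into V \<beta> w) = w \<and> inv_into V \<beta> w \<in> V"
      using is_aut_bij[OF ib] by (metis bij_betw_inv_into_right bij_betw_apply bij_betw_inv_into)
    have "\<forall>w\<in>V. c (\<gamma> w) = c w" unfolding \<gamma>_def using cv binv by fastforce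
    then have fx: "\<forall>w\<in>V. \<gamma> w = w" using c ig unfolding dist_cols_def distinguishing_def by blast
    have "\<alpha> v = \<beta> v" for v
    proof (cases "v \<in> V")
      case True
      have "inv_into V \<beta> (\<beta> v) = v" using is_aut_inj[OF ib] True by (simp add: inv_into_f_f)
      moreover have "\<beta> v \<in> V" using ib True by (rule is_aut_in)
      ultimately show ?thesis using fx unfolding \<gamma>_def by (metis comp_apply)
    next
      case False then show ?thesis using ext by (simp add: extensional_def)
    qed
    then show "\<alpha> = \<beta>" by auto
  qed
  then show ?thesis using class_eq[OF c] by (simp add: card_image)
qed

lemma Phi_mult:
  assumes "finite V"
  shows "card (Aut V E) * Phi k V E = card (dist_cols V E k)"
proof -
  have fin: "finite (dist_cols V E k)" unfolding dist_cols_def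
    by (rule finite_subset[OF _ finite_PiE[OF assms, of "\<lambda>_. {1..k}"]]) auto
  have eq: "equiv (dist_cols V E k) (rel V E k)" by (rule equiv_rel)
  have P: "Phi k V E = card (dist_cols V E k // rel V E k)"
    unfolding Phi_def rel_def by simp
  have "card (Aut V E) * card (dist_cols V E k // rel V E k) = card (\<Union> (dist_cols V E k // rel V E k))"
  proof (rule card_partition)
    show "finite (dist_cols V E k // rel V E k)" using fin equiv_type[OF eq] by (rule finite_quotient)
    show "finite (\<Union> (dist_cols V E k // rel V E k))" using fin eq by (simp add: Union_quotient)
    show "\<And>c. c\<in>dist_cols V E k // rel V E k \<Longrightarrow> card c = card (Aut V E)"
      by (auto simp: quotient_def class_card)
    show "\<And>c1 c2. c1\<in>dist_cols V E k // rel V E k \<Longrightarrow> c2\<in>dist_cols V E k // rel V E k \<Longrightarrow> c1 \<noteq> c2 \<Longrightarrow> c1 \<inter> c2 = {}"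
      using eq quotient_disj by blast
  qed
  then show ?thesis using P eq by (simp add: Union_quotient)
qed

lemma gE: "grid_E (a, b) (c, d) \<longleftrightarrow> (a = c \<and> (b + 1 = d \<or> d + 1 = b)) \<or> ((a + 1 = c \<or> c + 1 = a) \<and> b = d)"
  by (auto simp: grid_E_def cart_E_def path_E_def)

lemma gV: "(a, b) \<in> grid_V n \<longleftrightarrow> a < n \<and> b < n"
  by (auto simp: grid_V_def path_V_def)

lemma finite_gV: "finite (grid_V n)" by (simp add: grid_V_def path_V_def)
lemma card_gV: "card (grid_V n) = n * n" by (simp add: grid_V_def path_V_def)

definition r1 :: "nat \<Rightarrow> nat \<times> nat \<Rightarrow> nat \<times> nat" where "r1 n p = (snd p, n - 1 - fst p)"
definition r2 :: "nat \<Rightarrow> nat \<times> nat \<Rightarrow> nat \<times> nat" where "r2 n p = (n - 1 - fst p, n - 1 - snd p)"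
definition r3 :: "nat \<Rightarrow> nat \<times> nat \<Rightarrow> nat \<times> nat" where "r3 n p = (n - 1 - snd p, fst p)"
definition hh :: "nat \<Rightarrow> nat \<times> nat \<Rightarrow> nat \<times> nat" where "hh n p = (n - 1 - fst p, snd p)"
definition vv :: "nat \<Rightarrow> nat \<times> nat \<Rightarrow> nat \<times> nat" where "vv n p = (fst p, n - 1 - snd p)"
definition dd :: "nat \<times> nat \<Rightarrow> nat \<times> nat" where "dd p = (snd p, fst p)"
definition de :: "nat \<Rightarrow> nat \<times> nat \<Rightarrow> nat \<times> nat" where "de n p = (n - 1 - snd p, n - 1 - fst p)"

lemmas maps_def = r1_def r2_def r3_def hh_def vv_def dd_def de_def

lemma aut_by:
  assumes "\<forall>p\<in>grid_V n. g p \<in> grid_V n" "\<forall>p\<in>grid_V n. g' p \<in> grid_V n"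
    "\<forall>p\<in>grid_V n. g' (g p) = p" "\<forall>p\<in>grid_V n. g (g' p) = p"
    "\<forall>p\<in>grid_V n. \<forall>q\<in>grid_V n. grid_E p q \<longleftrightarrow> grid_E (g p) (g q)"
  shows "is_aut (grid_V n) grid_E g"
  unfolding is_aut_def using assms by (auto intro!: bij_betw_byWitness[where f'=g'])

lemma aut_r1: "is_aut (grid_V n) grid_E (r1 n)"
  by (rule aut_by[where g'="r3 n"]) (auto simp: maps_def gV gE)
lemma aut_r2: "is_aut (grid_V n) grid_E (r2 n)"
  by (rule aut_by[where g'="r2 n"]) (auto simp: maps_def gV gE)
lemma aut_r3: "is_aut (grid_V n) grid_E (r3 n)"
  by (rule aut_by[where g'="r1 n"]) (auto simp: maps_def gV gE)
lemma aut_hh: "is_aut (grid_V n) grid_E (hh n)"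
  by (rule aut_by[where g'="hh n"]) (auto simp: maps_def gV gE)
lemma aut_vv: "is_aut (grid_V n) grid_E (vv n)"
  by (rule aut_by[where g'="vv n"]) (auto simp: maps_def gV gE)
lemma aut_dd: "is_aut (grid_V n) grid_E dd"
  by (rule aut_by[where g'="dd"]) (auto simp: maps_def gV gE)
lemma aut_de: "is_aut (grid_V n) grid_E (de n)"
  by (rule aut_by[where g'="de n"]) (auto simp: maps_def gV gE)

lemma fix_unique:
  assumes "inj_on \<tau> V" "y \<in> S" "S \<subseteq> V" "\<tau> y \<in> S" "\<forall>z\<in>S. z \<noteq> y \<longrightarrow> \<tau> z = z"
  shows "\<tau> y = y"
  using assms by (metis inj_onD subsetD)

lemma nb_fix:
  assumes a: "is_aut V E \<tau>" and x: "x \<in> V" "\<tau> x = x" and y: "y \<in> V" "E x y"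
    and o: "\<forall>z\<in>V. E x z \<and> z \<noteq> y \<longrightarrow> \<tau> z = z"
  shows "\<tau> y = y"
proof (rule fix_unique[where S="{z\<in>V. E x z}"])
  show "inj_on \<tau> V" using a by (rule is_aut_inj)
  show "\<tau> y \<in> {z\<in>V. E x z}" using a x y is_aut_in is_aut_E by fastforce
qed (use y o in auto)

lemma cn_fix:
  assumes a: "is_aut V E \<tau>" and x: "x \<in> V" "\<tau> x = x" "x' \<in> V" "\<tau> x' = x'"
    and y: "y \<in> V" "E x y" "E x' y"
    and o: "\<forall>z\<in>V. E x z \<and> E x' z \<and> z \<noteq> y \<longrightarrow> \<tau> z = z"
  shows "\<tau> y = y"
proof (rule fix_unique[where S="{z\<in>V. E x z \<and> E x' z}"])
  show "inj_on \<tau> V" using a by (rule is_aut_inj)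
  show "\<tau> y \<in> {z\<in>V. E x z \<and> E x' z}" using a x y is_aut_in is_aut_E by fastforce
qed (use y o in auto)

lemma L2:
  assumes a: "is_aut (grid_V n) grid_E \<tau>" and n: "n \<ge> 3"
    and f0: "\<tau> (0,0) = (0,0)" and f1: "\<tau> (1,0) = (1,0)"
  shows "\<forall>x\<in>grid_V n. \<tau> x = x"
proof -
  let ?V = "grid_V n"
  have f2: "\<tau> (0,1) = (0,1)"
  proof (rule nb_fix[OF a, of "(0,0)"])
    show "\<forall>z\<in>?V. grid_E (0, 0) z \<and> z \<noteq> (0, 1) \<longrightarrow> \<tau> z = z"
      using f1 by (auto simp: gE)
  qed (use n f0 in \<open>auto simp: gE gV\<close>)
  have S2: "\<forall>i'\<le>i. \<tau> (i',0) = (i',0) \<and> \<tau> (i',1) = (i',1)" if "i < n" for i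
    using that
  proof (induction i)
    case 0 then show ?case using f0 f2 by auto
  next
    case (Suc i)
    then have IH: "\<forall>i'\<le>i. \<tau> (i',0) = (i',0) \<and> \<tau> (i',1) = (i',1)" by auto
    have A: "\<tau> (Suc i, 0) = (Suc i, 0)"
    proof (cases "i = 0")
      case True then show ?thesis using f1 by simp
    next
      case False
      show ?thesis
      proof (rule nb_fix[OF a, of "(i,0)"])
        show "\<forall>z\<in>?V. grid_E (i, 0) z \<and> z \<noteq> (Suc i, 0) \<longrightarrow> \<tau> z = z"
        proof (intro ballI impI)
          fix z assume "z \<in> ?V" "grid_E (i, 0) z \<and> z \<noteq> (Suc i, 0)"
          then obtain a b where z: "z = (a,b)" "grid_E (i, 0) (a,b)" "(a,b) \<noteq> (Suc i, 0)"
            by (cases z) auto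
          then have "a \<le> i \<and> (b = 0 \<or> b = 1)" by (auto simp: gE)
          then show "\<tau> z = z" using IH z by auto
        qed
      qed (use Suc IH in \<open>auto simp: gE gV\<close>)
    qed
    have B: "\<tau> (Suc i, 1) = (Suc i, 1)"
    proof (rule cn_fix[OF a, of "(Suc i, 0)" "(i, 1)"])
      show "\<forall>z\<in>?V. grid_E (Suc i, 0) z \<and> grid_E (i, 1) z \<and> z \<noteq> (Suc i, 1) \<longrightarrow> \<tau> z = z"
      proof (intro ballI impI)
        fix z assume "z \<in> ?V" "grid_E (Suc i, 0) z \<and> grid_E (i, 1) z \<and> z \<noteq> (Suc i, 1)"
        then obtain a b where z: "z = (a,b)" "grid_E (Suc i, 0) (a,b)" "grid_E (i, 1) (a,b)" "(a,b) \<noteq> (Suc i, 1)"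
          by (cases z) auto
        then have "a = i \<and> b = 0" by (auto simp: gE)
        then show "\<tau> z = z" using IH z by auto
      qed
    qed (use Suc IH A n in \<open>auto simp: gE gV\<close>)
    show ?case using IH A B le_Suc_eq by auto
  qed
  have S3: "\<forall>j'\<le>j. \<forall>i<n. \<tau> (i,j') = (i,j')" if "j < n" for j
    using that
  proof (induction j)
    case 0 then show ?case using S2 by auto
  next
    case (Suc j)
    then have IH: "\<forall>j'\<le>j. \<forall>i<n. \<tau> (i,j') = (i,j')" by auto
    have A: "\<tau> (i, Suc j) = (i, Suc j)" if i: "i < n" for i
    proof (cases "j = 0")
      case True then show ?thesis using S2 i by auto
    next
      case False
      show ?thesis
      proof (rule nb_fix[OF a, of "(i,j)"])
        show "\<forall>z\<in>?V. grid_E (i, j) z \<and> z \<noteq> (i, Suc j) \<longrightarrow> \<tau> z = z"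
        proof (intro ballI impI)
          fix z assume "z \<in> ?V" "grid_E (i, j) z \<and> z \<noteq> (i, Suc j)"
          then obtain a b where z: "z = (a,b)" "a < n" "grid_E (i, j) (a,b)" "(a,b) \<noteq> (i, Suc j)"
            by (cases z) (auto simp: gV)
          then have "b \<le> j" by (auto simp: gE)
          then show "\<tau> z = z" using IH z by auto
        qed
      qed (use Suc IH i in \<open>auto simp: gE gV\<close>)
    qed
    show ?case using IH A le_Suc_eq by auto
  qed
  show ?thesis
  proof
    fix x assume "x \<in> ?V"
    then obtain i j where "x = (i,j)" "i < n" "j < n" by (cases x) (auto simp: gV)
    then show "\<tau> x = x" using S3[of j] by auto
  qed
qed

lemma L1:
  assumes a: "is_aut (grid_V n) grid_E \<tau>" and n: "n \<ge> 3" and f0: "\<tau> (0,0) = (0,0)"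
  shows "(\<forall>x\<in>grid_V n. \<tau> x = x) \<or> (\<forall>x\<in>grid_V n. \<tau> x = dd x)"
proof -
  have in0: "(0,0) \<in> grid_V n" "(1,0) \<in> grid_V n" using n by (auto simp: gV)
  have "\<tau> (1,0) \<in> grid_V n" using a in0(2) by (rule is_aut_in)
  moreover have "grid_E (\<tau> (0,0)) (\<tau> (1,0))" using is_aut_E[OF a in0] by (simp add: gE)
  ultimately have "\<tau> (1,0) = (1,0) \<or> \<tau> (1,0) = (0,1)" unfolding f0
    by (cases "\<tau> (1,0)") (auto simp: gE)
  then show ?thesis
  proof
    assume "\<tau> (1,0) = (1,0)" then show ?thesis using L2[OF a n f0] by blast
  next
    assume h: "\<tau> (1,0) = (0,1)"
    have ad: "is_aut (grid_V n) grid_E (dd \<circ> \<tau>)" using aut_dd a by (rule is_aut_comp)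
    have "(dd \<circ> \<tau>) (0,0) = (0,0)" "(dd \<circ> \<tau>) (1,0) = (1,0)" using f0 h by (auto simp: dd_def)
    then have "\<forall>x\<in>grid_V n. (dd \<circ> \<tau>) x = x" using L2[OF ad n] by simp
    moreover have dd2: "\<And>y. dd (dd y) = y" by (simp add: dd_def)
    ultimately have "\<forall>x\<in>grid_V n. \<tau> x = dd x" by (metis comp_apply)
    then show ?thesis by blast
  qed
qed
definition Nb where "Nb n x = {z \<in> grid_V n. grid_E x z}"

lemma Nb_aut:
  assumes a: "is_aut (grid_V n) grid_E \<sigma>" and x: "x \<in> grid_V n"
  shows "card (Nb n (\<sigma> x)) = card (Nb n x)"
proof -
  have "\<sigma> ` Nb n x = Nb n (\<sigma> x)"
  proof
    show "\<sigma> ` Nb n x \<subseteq> Nb n (\<sigma> x)" using a x is_aut_in is_aut_E unfolding Nb_def by fastforce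
    show "Nb n (\<sigma> x) \<subseteq> \<sigma> ` Nb n x"
    proof
      fix z assume z: "z \<in> Nb n (\<sigma> x)"
      then have "z \<in> \<sigma> ` grid_V n" using is_aut_bij[OF a] unfolding Nb_def bij_betw_def by auto
      then obtain y where y: "y \<in> grid_V n" "z = \<sigma> y" by auto
      then have "grid_E x y" using z a x is_aut_E unfolding Nb_def by fastforce
      then show "z \<in> \<sigma> ` Nb n x" using y unfolding Nb_def by auto
    qed
  qed
  moreover have "inj_on \<sigma> (Nb n x)" using is_aut_inj[OF a] unfolding Nb_def
    by (rule inj_on_subset) auto
  ultimately show ?thesis by (metis card_image)
qed

lemma Nb00: "n \<ge> 3 \<Longrightarrow> Nb n (0,0) = {(1,0),(0,1)}"
  unfolding Nb_def by (auto simp: gV gE)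

lemma Nb_big:
  assumes n: "n \<ge> 3" and x: "(i,j) \<in> grid_V n" and nc: "\<not> ((i = 0 \<or> i = n - 1) \<and> (j = 0 \<or> j = n - 1))"
  shows "card (Nb n (i,j)) \<ge> 3"
proof -
  have fin: "finite (Nb n (i,j))" unfolding Nb_def using finite_gV by auto
  show ?thesis
  proof (cases "0 < i \<and> i < n - 1")
    case True
    define j' where "j' = (if j = 0 then 1 else j - 1)"
    have "{(i-1,j),(i+1,j),(i,j')} \<subseteq> Nb n (i,j)" using True x n unfolding Nb_def j'_def
      by (auto simp: gV gE)
    moreover have "card {(i-1,j),(i+1,j),(i,j')} = 3" using True unfolding j'_def by auto
    ultimately show ?thesis using fin by (metis card_mono)
  next
    case False
    then have T: "0 < j \<and> j < n - 1" using nc x by (auto simp: gV)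
    define i' where "i' = (if i = 0 then 1 else i - 1)"
    have "{(i,j-1),(i,j+1),(i',j)} \<subseteq> Nb n (i,j)" using T x n unfolding Nb_def i'_def
      by (auto simp: gV gE)
    moreover have "card {(i,j-1),(i,j+1),(i',j)} = 3" using T unfolding i'_def by auto
    ultimately show ?thesis using fin by (metis card_mono)
  qed
qed

lemma corner:
  assumes a: "is_aut (grid_V n) grid_E \<sigma>" and n: "n \<ge> 3"
  shows "\<sigma> (0,0) \<in> {(0,0), (0,n-1), (n-1,n-1), (n-1,0)}"
proof -
  have in0: "(0,0) \<in> grid_V n" using n by (auto simp: gV)
  have c: "card (Nb n (\<sigma> (0,0))) = 2" using Nb_aut[OF a in0] Nb00[OF n] by auto
  obtain i j where ij: "\<sigma> (0,0) = (i,j)" by (cases "\<sigma> (0,0)")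
  have "(i,j) \<in> grid_V n" using is_aut_in[OF a in0] ij by simp
  then have "(i = 0 \<or> i = n - 1) \<and> (j = 0 \<or> j = n - 1)" using Nb_big[OF n] c ij by fastforce
  then show ?thesis using ij by auto
qed

definition D8 where "D8 n = {id, r1 n, r2 n, r3 n, hh n, vv n, dd, de n}"

lemma aut_char:
  assumes a: "is_aut (grid_V n) grid_E \<sigma>" and n: "n \<ge> 3"
  shows "\<exists>g\<in>D8 n. \<forall>x\<in>grid_V n. \<sigma> x = g x"
proof -
  have key: "\<exists>g\<in>D8 n. \<forall>x\<in>grid_V n. \<sigma> x = g x"
    if rho: "is_aut (grid_V n) grid_E \<rho>" "\<rho> (\<sigma> (0,0)) = (0,0)"
      and inv: "\<forall>y\<in>grid_V n. \<rho>' (\<rho> y) = y"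
      and w1: "\<rho>' \<in> D8 n" and w2: "\<exists>g\<in>D8 n. \<forall>x\<in>grid_V n. g x = \<rho>' (dd x)"
    for \<rho> \<rho>'
  proof -
    have t: "is_aut (grid_V n) grid_E (\<rho> \<circ> \<sigma>)" using rho(1) a by (rule is_aut_comp)
    have s: "\<forall>x\<in>grid_V n. \<sigma> x = \<rho>' ((\<rho> \<circ> \<sigma>) x)"
    proof
      fix x assume "x \<in> grid_V n"
      then have "\<sigma> x \<in> grid_V n" by (rule is_aut_in[OF a])
      then show "\<sigma> x = \<rho>' ((\<rho> \<circ> \<sigma>) x)" using inv by simp
    qed
    have "(\<rho> \<circ> \<sigma>) (0,0) = (0,0)" using rho(2) by simp
    from L1[OF t n this] show ?thesis
    proof (elim disjE)
      assume "\<forall>x\<in>grid_V n. (\<rho> \<circ> \<sigma>) x = x"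
      then have "\<forall>x\<in>grid_V n. \<sigma> x = \<rho>' x" using s by metis
      then show ?thesis using w1 by blast
    next
      assume h: "\<forall>x\<in>grid_V n. (\<rho> \<circ> \<sigma>) x = dd x"
      obtain g where g: "g \<in> D8 n" "\<forall>x\<in>grid_V n. g x = \<rho>' (dd x)" using w2 by blast
      have "\<forall>x\<in>grid_V n. \<sigma> x = g x" using s h g(2) by metis
      then show ?thesis using g(1) by blast
    qed
  qed
  have c: "\<sigma> (0,0) \<in> {(0,0), (0,n-1), (n-1,n-1), (n-1,0)}" using corner[OF a n] .
  then consider "\<sigma> (0,0) = (0,0)" | "\<sigma> (0,0) = (0,n-1)" | "\<sigma> (0,0) = (n-1,n-1)" | "\<sigma> (0,0) = (n-1,0)"
    by auto
  then show ?thesis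
  proof cases
    case 1 show ?thesis
      by (rule key[where \<rho>=id and \<rho>'=id]) (use 1 is_aut_id in \<open>auto simp: D8_def intro!: bexI[of _ dd]\<close>)
  next
    case 2 show ?thesis
      by (rule key[where \<rho>="r3 n" and \<rho>'="r1 n"])
         (use 2 aut_r3 in \<open>auto simp: D8_def maps_def gV intro!: bexI[of _ "vv n"]\<close>)
  next
    case 3 show ?thesis
      by (rule key[where \<rho>="r2 n" and \<rho>'="r2 n"])
         (use 3 aut_r2 in \<open>auto simp: D8_def maps_def gV intro!: bexI[of _ "de n"]\<close>)
  next
    case 4 show ?thesis
      by (rule key[where \<rho>="r1 n" and \<rho>'="r3 n"])
         (use 4 aut_r1 in \<open>auto simp: D8_def maps_def gV intro!: bexI[of _ "hh n"]\<close>)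
  qed
qed

lemma D8_aut: "g \<in> D8 n \<Longrightarrow> is_aut (grid_V n) grid_E g"
  unfolding D8_def using is_aut_id aut_r1 aut_r2 aut_r3 aut_hh aut_vv aut_dd aut_de by auto

definition ev :: "(nat \<times> nat \<Rightarrow> nat \<times> nat) \<Rightarrow> (nat \<times> nat) \<times> (nat \<times> nat)" where
  "ev \<sigma> = (\<sigma> (0,0), \<sigma> (1,0))"

lemma card_Aut:
  assumes n: "n \<ge> 3"
  shows "card (Aut (grid_V n) grid_E) = 8"
proof -
  let ?V = "grid_V n"
  have in0: "(0,0) \<in> ?V" "(1,0) \<in> ?V" using n by (auto simp: gV)
  have inj: "inj_on ev (Aut ?V grid_E)"
  proof (rule inj_onI)
    fix s1 s2 assume s1: "s1 \<in> Aut ?V grid_E" and s2: "s2 \<in> Aut ?V grid_E" and e: "ev s1 = ev s2"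
    have a1: "is_aut ?V grid_E s1" and a2: "is_aut ?V grid_E s2" using s1 s2 unfolding Aut_def by auto
    have x1: "s1 \<in> extensional ?V" "s2 \<in> extensional ?V" using s1 s2 unfolding Aut_def by (auto simp: PiE_def)
    define \<gamma> where "\<gamma> = inv_into ?V s2 \<circ> s1"
    have ag: "is_aut ?V grid_E \<gamma>" unfolding \<gamma>_def using a1 a2 by (simp add: is_aut_comp is_aut_inv)
    have i2: "inj_on s2 ?V" using a2 by (rule is_aut_inj)
    have "\<gamma> (0,0) = (0,0)" "\<gamma> (1,0) = (1,0)" using e in0 i2 unfolding \<gamma>_def ev_def
      by (auto simp: inv_into_f_f)
    then have fx: "\<forall>x\<in>?V. \<gamma> x = x" using L2[OF ag n] by simp
    have "s1 x = s2 x" for x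
    proof (cases "x \<in> ?V")
      case True
      have "s1 x \<in> s2 ` ?V" using is_aut_in[OF a1 True] is_aut_bij[OF a2] by (simp add: bij_betw_def)
      then have "s2 (inv_into ?V s2 (s1 x)) = s1 x" by (rule f_inv_into_f)
      moreover have "inv_into ?V s2 (s1 x) = x" using fx True unfolding \<gamma>_def by simp
      ultimately show ?thesis by simp
    next
      case False then show ?thesis using x1 by (metis extensional_arb)
    qed
    then show "s1 = s2" by auto
  qed
  have img: "ev ` Aut ?V grid_E = ev ` D8 n"
  proof
    show "ev ` Aut ?V grid_E \<subseteq> ev ` D8 n"
    proof
      fix p assume "p \<in> ev ` Aut ?V grid_E"
      then obtain \<sigma> where s: "\<sigma> \<in> Aut ?V grid_E" "p = ev \<sigma>" by auto
      then obtain g where g: "g \<in> D8 n" "\<forall>x\<in>?V. \<sigma> x = g x" using aut_char[OF _ n] unfolding Aut_def by blast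
      then have "ev \<sigma> = ev g" using in0 unfolding ev_def by simp
      then show "p \<in> ev ` D8 n" using s g by auto
    qed
    show "ev ` D8 n \<subseteq> ev ` Aut ?V grid_E"
    proof
      fix p assume "p \<in> ev ` D8 n"
      then obtain g where g: "g \<in> D8 n" "p = ev g" by auto
      have ag: "is_aut ?V grid_E g" using g(1) by (rule D8_aut)
      have "restrict g ?V \<in> Aut ?V grid_E" unfolding Aut_def
        using is_aut_in[OF ag] is_aut_cong[OF ag] by auto
      moreover have "ev (restrict g ?V) = ev g" using in0 unfolding ev_def by simp
      ultimately show "p \<in> ev ` Aut ?V grid_E" using g by (metis image_eqI)
    qed
  qed
  have "card (ev ` D8 n) = 8" using n unfolding D8_def ev_def maps_def by simp
  then show ?thesis using img inj by (metis card_image)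
qed

definition fx :: "(nat \<times> nat) set \<Rightarrow> (nat \<times> nat \<Rightarrow> nat) \<Rightarrow> (nat \<times> nat \<Rightarrow> nat \<times> nat) \<Rightarrow> bool" where
  "fx V c g \<longleftrightarrow> (\<forall>v\<in>V. c (g v) = c v)"

lemma fx_comp:
  assumes "fx V c g1" "fx V c g2" "\<forall>v\<in>V. g2 v \<in> V" "\<forall>v\<in>V. g3 v = g1 (g2 v)"
  shows "fx V c g3"
  using assms unfolding fx_def by metis

lemma dist_iff:
  assumes n: "n \<ge> 3"
  shows "distinguishing (grid_V n) grid_E c \<longleftrightarrow>
    \<not> (fx (grid_V n) c (r2 n) \<or> fx (grid_V n) c (hh n) \<or> fx (grid_V n) c (vv n) \<or> fx (grid_V n) c dd \<or> fx (grid_V n) c (de n))"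
proof
  let ?V = "grid_V n"
  have in0: "(0,0) \<in> ?V" "(1,0) \<in> ?V" using n by (auto simp: gV)
  assume d: "distinguishing ?V grid_E c"
  have no: "\<not> fx ?V c g" if "is_aut ?V grid_E g" "g p \<noteq> p" "p \<in> ?V" for g p
    using d that unfolding distinguishing_def fx_def by blast
  have "r2 n (0,0) \<noteq> (0,0)" "hh n (0,0) \<noteq> (0,0)" "vv n (0,0) \<noteq> (0,0)" "dd (1,0) \<noteq> (1,0)"
    "de n (0,0) \<noteq> (0,0)" using n by (simp_all add: maps_def)
  then show "\<not> (fx ?V c (r2 n) \<or> fx ?V c (hh n) \<or> fx ?V c (vv n) \<or> fx ?V c dd \<or> fx ?V c (de n))"
    using no[OF aut_r2 _ in0(1)] no[OF aut_hh _ in0(1)] no[OF aut_vv _ in0(1)] no[OF aut_dd _ in0(2)]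
      no[OF aut_de _ in0(1)] by blast
next
  let ?V = "grid_V n"
  assume nf: "\<not> (fx ?V c (r2 n) \<or> fx ?V c (hh n) \<or> fx ?V c (vv n) \<or> fx ?V c dd \<or> fx ?V c (de n))"
  show "distinguishing ?V grid_E c"
    unfolding distinguishing_def
  proof (intro allI impI)
    fix \<sigma> assume h: "is_aut ?V grid_E \<sigma> \<and> (\<forall>v\<in>?V. c (\<sigma> v) = c v)"
    then have ha: "is_aut ?V grid_E \<sigma>" by simp
    obtain g where g: "g \<in> D8 n" "\<forall>x\<in>?V. \<sigma> x = g x" using aut_char[OF ha n] by blast
    have f: "fx ?V c g" unfolding fx_def
    proof
      fix v assume "v \<in> ?V" then show "c (g v) = c v" using h g(2) by metis
    qed
    have V1: "\<forall>v\<in>?V. r1 n v \<in> ?V" "\<forall>v\<in>?V. r3 n v \<in> ?V"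
      using is_aut_in[OF aut_r1] is_aut_in[OF aut_r3] by blast+
    have "\<not> fx ?V c (r1 n)"
    proof
      assume fr: "fx ?V c (r1 n)"
      have eq: "\<forall>v\<in>?V. r2 n v = r1 n (r1 n v)" by (simp add: maps_def)
      have "fx ?V c (r2 n)" by (rule fx_comp[OF fr fr V1(1) eq])
      then show False using nf by auto
    qed
    moreover have "\<not> fx ?V c (r3 n)"
    proof
      assume fr: "fx ?V c (r3 n)"
      have eq: "\<forall>v\<in>?V. r2 n v = r3 n (r3 n v)" by (simp add: maps_def)
      have "fx ?V c (r2 n)" by (rule fx_comp[OF fr fr V1(2) eq])
      then show False using nf by auto
    qed
    ultimately have "g = id" using g(1) f nf unfolding D8_def by (elim insertE) auto
    then show "\<forall>v\<in>?V. \<sigma> v = v" using g by simp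
  qed
qed

lemma rep_card:
  assumes fin: "finite V" and RV: "R \<subseteq> V" and rin: "\<forall>v\<in>V. rep v \<in> R" and rid: "\<forall>r\<in>R. rep r = r"
  shows "card {c \<in> V \<rightarrow>\<^sub>E {1..k}. \<forall>v\<in>V. c v = c (rep v)} = k ^ card R"
proof -
  let ?S = "{c \<in> V \<rightarrow>\<^sub>E {1..k}. \<forall>v\<in>V. c v = c (rep v)}"
  have "bij_betw (\<lambda>c. restrict c R) ?S (R \<rightarrow>\<^sub>E {1..k})"
    unfolding bij_betw_def
  proof
    show "inj_on (\<lambda>c. restrict c R) ?S"
    proof (rule inj_onI)
      fix c1 c2 assume c1: "c1 \<in> ?S" and c2: "c2 \<in> ?S" and e: "restrict c1 R = restrict c2 R"
      show "c1 = c2"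
      proof
        fix x show "c1 x = c2 x"
        proof (cases "x \<in> V")
          case True
          then have "rep x \<in> R" using rin by auto
          then have "c1 (rep x) = c2 (rep x)" using e by (metis restrict_apply')
          then show ?thesis using c1 c2 True by auto
        next
          case False then show ?thesis using c1 c2 by (auto simp: PiE_def extensional_def)
        qed
      qed
    qed
    show "(\<lambda>c. restrict c R) ` ?S = R \<rightarrow>\<^sub>E {1..k}"
    proof
      show "(\<lambda>c. restrict c R) ` ?S \<subseteq> R \<rightarrow>\<^sub>E {1..k}" using RV by auto
      show "R \<rightarrow>\<^sub>E {1..k} \<subseteq> (\<lambda>c. restrict c R) ` ?S"
      proof
        fix d assume d: "d \<in> R \<rightarrow>\<^sub>E {1..k}"
        define c where "c = restrict (\<lambda>v. d (rep v)) V"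
        have "c \<in> ?S" unfolding c_def using d rin RV rid by (auto simp: subset_iff)
        moreover have "restrict c R = d"
        proof
          fix x show "restrict c R x = d x"
            using d rid RV unfolding c_def by (cases "x \<in> R") (auto simp: PiE_def extensional_def)
        qed
        ultimately show "d \<in> (\<lambda>c. restrict c R) ` ?S" by force
      qed
    qed
  qed
  then have "card ?S = card (R \<rightarrow>\<^sub>E {1..k})" by (rule bij_betw_same_card)
  also have "\<dots> = k ^ card R" using finite_subset[OF RV fin] by (simp add: card_PiE)
  finally show ?thesis .
qed

lemma inv_fix:
  assumes "\<forall>v\<in>V. g v \<in> V" "\<forall>v\<in>V. rep v = v \<or> rep v = g v" "\<forall>v\<in>V. rep (g v) = rep v"
  shows "fx V c g \<longleftrightarrow> (\<forall>v\<in>V. c v = c (rep v))"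
  using assms unfolding fx_def by metis

lemma inv2_fix:
  assumes "\<forall>v\<in>V. g1 v \<in> V" "\<forall>v\<in>V. g2 v \<in> V"
    "\<forall>v\<in>V. rep v = v \<or> rep v = g1 v \<or> rep v = g2 v \<or> rep v = g1 (g2 v)"
    "\<forall>v\<in>V. rep (g1 v) = rep v" "\<forall>v\<in>V. rep (g2 v) = rep v"
  shows "fx V c g1 \<and> fx V c g2 \<longleftrightarrow> (\<forall>v\<in>V. c v = c (rep v))"
proof
  assume "fx V c g1 \<and> fx V c g2"
  then show "\<forall>v\<in>V. c v = c (rep v)" using assms(2,3) unfolding fx_def by metis
next
  assume h: "\<forall>v\<in>V. c v = c (rep v)"
  show "fx V c g1 \<and> fx V c g2" unfolding fx_def
    using h assms(1,2,4,5) by metis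
qed

abbreviation Col where "Col n k \<equiv> grid_V n \<rightarrow>\<^sub>E {1..k}"

definition rep_h where "rep_h n p = (min (fst p) (n - 1 - fst p), snd p)"
definition R_h where "R_h n = {0..<(n+1) div 2} \<times> {0..<n}"
definition rep_v where "rep_v n p = (fst p, min (snd p) (n - 1 - snd p))"
definition R_v where "R_v n = {0..<n} \<times> {0..<(n+1) div 2}"
definition rep_hv where "rep_hv n p = (min (fst p) (n - 1 - fst p), min (snd p) (n - 1 - snd p))"
definition R_hv where "R_hv n = {0..<(n+1) div 2} \<times> {0..<(n+1) div 2}"

lemma card_fix_gen:
  assumes "R \<subseteq> grid_V n" "\<forall>v\<in>grid_V n. rep v \<in> R" "\<forall>r\<in>R. rep r = r"
    and "\<And>c. P c \<longleftrightarrow> (\<forall>v\<in>grid_V n. c v = c (rep v))"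
  shows "card {c \<in> Col n k. P c} = k ^ card R"
  using rep_card[OF finite_gV assms(1-3), of k] assms(4) by simp

lemma card_B: "card {c \<in> Col n k. fx (grid_V n) c (hh n)} = k ^ (n * ((n+1) div 2))"
proof -
  have "card {c \<in> Col n k. fx (grid_V n) c (hh n)} = k ^ card (R_h n)"
  proof (rule card_fix_gen[where rep="rep_h n"])
    show "R_h n \<subseteq> grid_V n" unfolding R_h_def by (auto simp: gV)
    show "\<forall>v\<in>grid_V n. rep_h n v \<in> R_h n" unfolding R_h_def rep_h_def by (auto simp: gV)
    show "\<forall>r\<in>R_h n. rep_h n r = r" unfolding R_h_def rep_h_def by (auto simp: gV)
    show "fx (grid_V n) c (hh n) \<longleftrightarrow> (\<forall>v\<in>grid_V n. c v = c (rep_h n v))" for c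
      by (rule inv_fix) (auto simp: gV hh_def rep_h_def)
  qed
  then show ?thesis unfolding R_h_def by (simp add: mult.commute)
qed


lemma card_C: "card {c \<in> Col n k. fx (grid_V n) c (vv n)} = k ^ (n * ((n+1) div 2))"
proof -
  have "card {c \<in> Col n k. fx (grid_V n) c (vv n)} = k ^ card (R_v n)"
  proof (rule card_fix_gen[where rep="rep_v n"])
    show "R_v n \<subseteq> grid_V n" unfolding R_v_def by (auto simp: gV)
    show "\<forall>v\<in>grid_V n. rep_v n v \<in> R_v n" unfolding R_v_def rep_v_def by (auto simp: gV)
    show "\<forall>r\<in>R_v n. rep_v n r = r" unfolding R_v_def rep_v_def by (auto simp: gV)
    show "fx (grid_V n) c (vv n) \<longleftrightarrow> (\<forall>v\<in>grid_V n. c v = c (rep_v n v))" for c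
      by (rule inv_fix) (auto simp: gV vv_def rep_v_def)
  qed
  then show ?thesis unfolding R_v_def by simp
qed

definition rep_d where "rep_d p = (min (fst p) (snd p), max (fst p) (snd p))"
definition R_d where "R_d n = (SIGMA i:{..<n}. {i..<n})"

lemma sum_tri: "(\<Sum>i<n. Suc i) = (n::nat) * (n + 1) div 2"
  by (induction n) auto

lemma sum_tri2: "(\<Sum>i<n. n - i) = (n::nat) * (n + 1) div 2"
proof -
  have "(\<Sum>i<n. n - i) = (\<Sum>i<n. Suc (n - Suc i))" by (rule sum.cong) auto
  also have "\<dots> = (\<Sum>i<n. Suc i)" by (rule sum.nat_diff_reindex)
  finally show ?thesis using sum_tri by simp
qed

lemma card_R_d: "card (R_d n) = n * (n + 1) div 2"
  unfolding R_d_def using sum_tri2 by simp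

lemma card_D: "card {c \<in> Col n k. fx (grid_V n) c dd} = k ^ (n * (n + 1) div 2)"
proof -
  have "card {c \<in> Col n k. fx (grid_V n) c dd} = k ^ card (R_d n)"
  proof (rule card_fix_gen[where rep="rep_d"])
    show "R_d n \<subseteq> grid_V n" unfolding R_d_def by (auto simp: gV)
    show "\<forall>v\<in>grid_V n. rep_d v \<in> R_d n" unfolding R_d_def rep_d_def by (auto simp: gV)
    show "\<forall>r\<in>R_d n. rep_d r = r" unfolding R_d_def rep_d_def by (auto simp: gV)
    show "fx (grid_V n) c dd \<longleftrightarrow> (\<forall>v\<in>grid_V n. c v = c (rep_d v))" for c
      by (rule inv_fix) (auto simp: gV dd_def rep_d_def)
  qed
  then show ?thesis using card_R_d by simp
qed

definition rep_de where "rep_de n p = (if fst p + snd p < n then p else (n - 1 - snd p, n - 1 - fst p))"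
definition R_de where "R_de n = (SIGMA i:{..<n}. {..<n - i})"

lemma card_E: "card {c \<in> Col n k. fx (grid_V n) c (de n)} = k ^ (n * (n + 1) div 2)"
proof -
  have "card {c \<in> Col n k. fx (grid_V n) c (de n)} = k ^ card (R_de n)"
  proof (rule card_fix_gen[where rep="rep_de n"])
    show "R_de n \<subseteq> grid_V n" unfolding R_de_def by (auto simp: gV)
    show "\<forall>v\<in>grid_V n. rep_de n v \<in> R_de n" unfolding R_de_def rep_de_def by (auto simp: gV)
    show "\<forall>r\<in>R_de n. rep_de n r = r" unfolding R_de_def rep_de_def by (auto simp: gV)
    show "fx (grid_V n) c (de n) \<longleftrightarrow> (\<forall>v\<in>grid_V n. c v = c (rep_de n v))" for c
      by (rule inv_fix) (auto simp: gV de_def rep_de_def)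
  qed
  moreover have "card (R_de n) = n * (n + 1) div 2" unfolding R_de_def using sum_tri2 by simp
  ultimately show ?thesis by simp
qed

lemma card_F1: "card {c \<in> Col n k. fx (grid_V n) c (hh n) \<and> fx (grid_V n) c (vv n)} = k ^ (((n+1) div 2)^2)"
proof -
  have "card {c \<in> Col n k. fx (grid_V n) c (hh n) \<and> fx (grid_V n) c (vv n)} = k ^ card (R_hv n)"
  proof (rule card_fix_gen[where rep="rep_hv n"])
    show "R_hv n \<subseteq> grid_V n" unfolding R_hv_def by (auto simp: gV)
    show "\<forall>v\<in>grid_V n. rep_hv n v \<in> R_hv n" unfolding R_hv_def rep_hv_def by (auto simp: gV)
    show "\<forall>r\<in>R_hv n. rep_hv n r = r" unfolding R_hv_def rep_hv_def by (auto simp: gV)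
    show "fx (grid_V n) c (hh n) \<and> fx (grid_V n) c (vv n) \<longleftrightarrow> (\<forall>v\<in>grid_V n. c v = c (rep_hv n v))" for c
      by (rule inv2_fix) (auto simp: gV hh_def vv_def rep_hv_def)
  qed
  then show ?thesis unfolding R_hv_def by (simp add: power2_eq_square)
qed

definition rep_f2 where "rep_f2 n p = (if min (fst p) (snd p) + max (fst p) (snd p) < n
   then (min (fst p) (snd p), max (fst p) (snd p))
   else (n - 1 - max (fst p) (snd p), n - 1 - min (fst p) (snd p)))"
definition R_f2 where "R_f2 n = (SIGMA i:{..<(n+1) div 2}. {i..<n - i})"

lemma sum_even: "(\<Sum>i<p. 2*p - i - i) = (p::nat) * (p + 1)"
proof -
  have "(\<Sum>i<p. 2*p - i - i) = (\<Sum>i<p. 2 * (p - Suc i) + 2)" by (rule sum.cong) auto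
  also have "\<dots> = (\<Sum>i<p. 2 * i + 2)" by (rule sum.nat_diff_reindex)
  also have "\<dots> = p * (p + 1)" by (induction p) auto
  finally show ?thesis .
qed

lemma sum_odd: "(\<Sum>i<Suc p. 2*p + 1 - i - i) = (p + 1) * (p + 1)"
proof -
  have "(\<Sum>i<Suc p. 2*p + 1 - i - i) = (\<Sum>i<Suc p. 2 * (Suc p - Suc i) + 1)" by (rule sum.cong) auto
  also have "\<dots> = (\<Sum>i<Suc p. 2 * i + 1)" by (rule sum.nat_diff_reindex)
  also have "\<dots> = (p + 1) * (p + 1)" by (induction p) auto
  finally show ?thesis .
qed

lemma card_R_f2: "card (R_f2 n) = ((n+1) div 2) * ((n+2) div 2)"
proof -
  have "card (R_f2 n) = (\<Sum>i<(n+1) div 2. n - i - i)" unfolding R_f2_def by simp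
  also have "\<dots> = ((n+1) div 2) * ((n+2) div 2)"
  proof (cases "even n")
    case True
    then obtain p where p: "n = 2 * p" by auto
    have "(n+1) div 2 = p" "(n+2) div 2 = p + 1" using p by auto
    then show ?thesis using sum_even[of p] p by simp
  next
    case False
    then obtain p where p: "n = 2 * p + 1" using oddE by blast
    have "(n+1) div 2 = Suc p" "(n+2) div 2 = p + 1" using p by auto
    then show ?thesis using sum_odd[of p] p by simp
  qed
  finally show ?thesis .
qed

lemma card_F2: "card {c \<in> Col n k. fx (grid_V n) c dd \<and> fx (grid_V n) c (de n)} = k ^ (((n+1) div 2) * ((n+2) div 2))"
proof -
  have "card {c \<in> Col n k. fx (grid_V n) c dd \<and> fx (grid_V n) c (de n)} = k ^ card (R_f2 n)"
  proof (rule card_fix_gen[where rep="rep_f2 n"])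
    show "R_f2 n \<subseteq> grid_V n" unfolding R_f2_def by (auto simp: gV)
    show "\<forall>v\<in>grid_V n. rep_f2 n v \<in> R_f2 n" unfolding R_f2_def rep_f2_def by (auto simp: gV)
    show "\<forall>r\<in>R_f2 n. rep_f2 n r = r" unfolding R_f2_def rep_f2_def by (auto simp: gV)
    show "fx (grid_V n) c dd \<and> fx (grid_V n) c (de n) \<longleftrightarrow> (\<forall>v\<in>grid_V n. c v = c (rep_f2 n v))" for c
      by (rule inv2_fix) (auto simp: gV dd_def de_def rep_f2_def min_def max_def)
  qed
  then show ?thesis using card_R_f2 by simp
qed

definition rep_r2 where "rep_r2 n p = (if 2 * fst p + 1 < n \<or> (2 * fst p + 1 = n \<and> 2 * snd p + 1 \<le> n)
   then p else r2 n p)"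
definition R_r2 where "R_r2 n = {0..<n div 2} \<times> {0..<n} \<union> {p. 2 * fst p + 1 = n \<and> snd p < (n+1) div 2}"

lemma card_R_r2: "card (R_r2 n) = (n * n + 1) div 2"
proof (cases "even n")
  case True
  then obtain p where p: "n = 2 * p" by auto
  have "R_r2 n = {0..<p} \<times> {0..<n}" unfolding R_r2_def using p by auto
  then show ?thesis using p by simp
next
  case False
  then obtain p where p: "n = 2 * p + 1" using oddE by blast
  have e: "R_r2 n = {0..<p} \<times> {0..<n} \<union> {p} \<times> {0..<p+1}" unfolding R_r2_def using p by auto
  have "card ({0..<p} \<times> {0..<n} \<union> {p} \<times> {0..<p+1}) = p * n + (p + 1)"
    by (subst card_Un_disjoint) auto
  moreover have "(n * n + 1) div 2 = p * n + (p + 1)" using p by (simp add: algebra_simps)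
  ultimately show ?thesis using e by simp
qed

lemma card_A: "card {c \<in> Col n k. fx (grid_V n) c (r2 n)} = k ^ ((n * n + 1) div 2)"
proof -
  have "card {c \<in> Col n k. fx (grid_V n) c (r2 n)} = k ^ card (R_r2 n)"
  proof (rule card_fix_gen[where rep="rep_r2 n"])
    show "R_r2 n \<subseteq> grid_V n" unfolding R_r2_def by (auto simp: gV)
    show "\<forall>v\<in>grid_V n. rep_r2 n v \<in> R_r2 n" unfolding R_r2_def rep_r2_def by (auto simp: gV r2_def)
    show "\<forall>r\<in>R_r2 n. rep_r2 n r = r" unfolding R_r2_def rep_r2_def by (auto simp: gV)
    show "fx (grid_V n) c (r2 n) \<longleftrightarrow> (\<forall>v\<in>grid_V n. c v = c (rep_r2 n v))" for c
      by (rule inv_fix) (auto simp: gV r2_def rep_r2_def)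
  qed
  then show ?thesis using card_R_r2 by simp
qed

lemma fx_imp:
  assumes "\<forall>v\<in>V. g2 v \<in> V" "\<forall>v\<in>V. g3 v = g1 (g2 v)"
  shows "fx V c g1 \<and> fx V c g2 \<longrightarrow> fx V c g3"
  using fx_comp[OF _ _ assms] by blast

lemma t1: "fx (grid_V n) c (r2 n) \<and> fx (grid_V n) c (hh n) \<longrightarrow> fx (grid_V n) c (vv n)"
proof (rule fx_imp)
  show "\<forall>v\<in>grid_V n. (hh n) v \<in> grid_V n" using is_aut_in[OF aut_hh] by blast
  show "\<forall>v\<in>grid_V n. (vv n) v = (r2 n) ((hh n) v)" by (clarsimp simp: gV maps_def)
qed

lemma t2: "fx (grid_V n) c (r2 n) \<and> fx (grid_V n) c (vv n) \<longrightarrow> fx (grid_V n) c (hh n)"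
proof (rule fx_imp)
  show "\<forall>v\<in>grid_V n. (vv n) v \<in> grid_V n" using is_aut_in[OF aut_vv] by blast
  show "\<forall>v\<in>grid_V n. (hh n) v = (r2 n) ((vv n) v)" by (clarsimp simp: gV maps_def)
qed

lemma t3: "fx (grid_V n) c (hh n) \<and> fx (grid_V n) c (vv n) \<longrightarrow> fx (grid_V n) c (r2 n)"
proof (rule fx_imp)
  show "\<forall>v\<in>grid_V n. (vv n) v \<in> grid_V n" using is_aut_in[OF aut_vv] by blast
  show "\<forall>v\<in>grid_V n. (r2 n) v = (hh n) ((vv n) v)" by (clarsimp simp: gV maps_def)
qed

lemma t4: "fx (grid_V n) c (r2 n) \<and> fx (grid_V n) c (dd) \<longrightarrow> fx (grid_V n) c (de n)"
proof (rule fx_imp)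
  show "\<forall>v\<in>grid_V n. (dd) v \<in> grid_V n" using is_aut_in[OF aut_dd] by blast
  show "\<forall>v\<in>grid_V n. (de n) v = (r2 n) ((dd) v)" by (clarsimp simp: gV maps_def)
qed

lemma t5: "fx (grid_V n) c (r2 n) \<and> fx (grid_V n) c (de n) \<longrightarrow> fx (grid_V n) c (dd)"
proof (rule fx_imp)
  show "\<forall>v\<in>grid_V n. (de n) v \<in> grid_V n" using is_aut_in[OF aut_de] by blast
  show "\<forall>v\<in>grid_V n. (dd) v = (r2 n) ((de n) v)" by (clarsimp simp: gV maps_def)
qed

lemma t6: "fx (grid_V n) c (dd) \<and> fx (grid_V n) c (de n) \<longrightarrow> fx (grid_V n) c (r2 n)"
proof (rule fx_imp)
  show "\<forall>v\<in>grid_V n. (de n) v \<in> grid_V n" using is_aut_in[OF aut_de] by blast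
  show "\<forall>v\<in>grid_V n. (r2 n) v = (dd) ((de n) v)" by (clarsimp simp: gV maps_def)
qed

lemma t7: "fx (grid_V n) c (hh n) \<and> fx (grid_V n) c (dd) \<longrightarrow> fx (grid_V n) c (r3 n)"
proof (rule fx_imp)
  show "\<forall>v\<in>grid_V n. (dd) v \<in> grid_V n" using is_aut_in[OF aut_dd] by blast
  show "\<forall>v\<in>grid_V n. (r3 n) v = (hh n) ((dd) v)" by (clarsimp simp: gV maps_def)
qed

lemma t8: "fx (grid_V n) c (hh n) \<and> fx (grid_V n) c (de n) \<longrightarrow> fx (grid_V n) c (r1 n)"
proof (rule fx_imp)
  show "\<forall>v\<in>grid_V n. (de n) v \<in> grid_V n" using is_aut_in[OF aut_de] by blast
  show "\<forall>v\<in>grid_V n. (r1 n) v = (hh n) ((de n) v)" by (clarsimp simp: gV maps_def)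
qed

lemma t9: "fx (grid_V n) c (vv n) \<and> fx (grid_V n) c (dd) \<longrightarrow> fx (grid_V n) c (r1 n)"
proof (rule fx_imp)
  show "\<forall>v\<in>grid_V n. (dd) v \<in> grid_V n" using is_aut_in[OF aut_dd] by blast
  show "\<forall>v\<in>grid_V n. (r1 n) v = (vv n) ((dd) v)" by (clarsimp simp: gV maps_def)
qed

lemma t10: "fx (grid_V n) c (vv n) \<and> fx (grid_V n) c (de n) \<longrightarrow> fx (grid_V n) c (r3 n)"
proof (rule fx_imp)
  show "\<forall>v\<in>grid_V n. (de n) v \<in> grid_V n" using is_aut_in[OF aut_de] by blast
  show "\<forall>v\<in>grid_V n. (r3 n) v = (vv n) ((de n) v)" by (clarsimp simp: gV maps_def)
qed

lemma t11: "fx (grid_V n) c (r1 n) \<and> fx (grid_V n) c (r1 n) \<longrightarrow> fx (grid_V n) c (r2 n)"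
proof (rule fx_imp)
  show "\<forall>v\<in>grid_V n. (r1 n) v \<in> grid_V n" using is_aut_in[OF aut_r1] by blast
  show "\<forall>v\<in>grid_V n. (r2 n) v = (r1 n) ((r1 n) v)" by (clarsimp simp: gV maps_def)
qed

lemma t12: "fx (grid_V n) c (r3 n) \<and> fx (grid_V n) c (r3 n) \<longrightarrow> fx (grid_V n) c (r2 n)"
proof (rule fx_imp)
  show "\<forall>v\<in>grid_V n. (r3 n) v \<in> grid_V n" using is_aut_in[OF aut_r3] by blast
  show "\<forall>v\<in>grid_V n. (r2 n) v = (r3 n) ((r3 n) v)" by (clarsimp simp: gV maps_def)
qed

lemmas comp_facts = t1 t2 t3 t4 t5 t6 t7 t8 t9 t10 t11 t12

lemma ceil2: "nat \<lceil>real a / 2\<rceil> = (a + 1) div 2"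
proof (cases "even a")
  case True
  then obtain p where p: "a = 2 * p" by auto
  have "\<lceil>real a / 2\<rceil> = int p" using p by (intro ceiling_unique) auto
  then show ?thesis using p by simp
next
  case False
  then obtain p where p: "a = 2 * p + 1" using oddE by blast
  have "\<lceil>real a / 2\<rceil> = int p + 1" using p by (intro ceiling_unique) auto
  then show ?thesis using p by simp
qed


lemma count_main:
  assumes n: "n \<ge> 3"
  shows "8 * Phi k (grid_V n) grid_E + (k ^ ((n * n + 1) div 2) + 2 * k ^ (n * ((n+1) div 2))
          + 2 * k ^ (n * (n + 1) div 2))
       = k ^ (n * n) + 2 * k ^ (((n+1) div 2)^2) + 2 * k ^ (((n+1) div 2) * ((n+2) div 2))"
proof -
  let ?V = "grid_V n"
  define SA where "SA = {c \<in> Col n k. fx ?V c (r2 n)}"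
  define SB where "SB = {c \<in> Col n k. fx ?V c (hh n)}"
  define SC where "SC = {c \<in> Col n k. fx ?V c (vv n)}"
  define SD where "SD = {c \<in> Col n k. fx ?V c dd}"
  define SE where "SE = {c \<in> Col n k. fx ?V c (de n)}"
  define F1 where "F1 = {c \<in> Col n k. fx ?V c (hh n) \<and> fx ?V c (vv n)}"
  define F2 where "F2 = {c \<in> Col n k. fx ?V c dd \<and> fx ?V c (de n)}"
  define U where "U = SA \<union> SB \<union> SC \<union> (SD \<union> SE)"
  have finC: "finite (Col n k)" using finite_gV by (simp add: finite_PiE)
  have fins: "finite SA" "finite SB" "finite SC" "finite SD" "finite SE" "finite U"
    unfolding SA_def SB_def SC_def SD_def SE_def U_def using finC by auto
  have p: "\<And>c. (fx ?V c (r2 n) \<and> fx ?V c (hh n)) = (fx ?V c (hh n) \<and> fx ?V c (vv n))"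
    "\<And>c. ((fx ?V c (r2 n) \<or> fx ?V c (hh n)) \<and> fx ?V c (vv n)) = (fx ?V c (hh n) \<and> fx ?V c (vv n))"
    "\<And>c. ((fx ?V c (r2 n) \<or> fx ?V c (hh n) \<or> fx ?V c (vv n)) \<and> (fx ?V c dd \<or> fx ?V c (de n)))
         = (fx ?V c dd \<and> fx ?V c (de n))"
  proof -
    fix c
    note q = t1[of n c] t2[of n c] t3[of n c] t4[of n c] t5[of n c] t6[of n c] t7[of n c]
      t8[of n c] t9[of n c] t10[of n c] t11[of n c] t12[of n c]
    show "(fx ?V c (r2 n) \<and> fx ?V c (hh n)) = (fx ?V c (hh n) \<and> fx ?V c (vv n))" using q by blast
    show "((fx ?V c (r2 n) \<or> fx ?V c (hh n)) \<and> fx ?V c (vv n)) = (fx ?V c (hh n) \<and> fx ?V c (vv n))"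
      using q by blast
    show "((fx ?V c (r2 n) \<or> fx ?V c (hh n) \<or> fx ?V c (vv n)) \<and> (fx ?V c dd \<or> fx ?V c (de n)))
         = (fx ?V c dd \<and> fx ?V c (de n))" using q by blast
  qed
  have e1: "SA \<inter> SB = F1" "(SA \<union> SB) \<inter> SC = F1" "SD \<inter> SE = F2"
    "(SA \<union> SB \<union> SC) \<inter> (SD \<union> SE) = F2"
  proof -
    show "SA \<inter> SB = F1" unfolding SA_def SB_def F1_def using p(1) by auto
    show "(SA \<union> SB) \<inter> SC = F1" unfolding SA_def SB_def SC_def F1_def using p(2) by auto
    show "SD \<inter> SE = F2" unfolding SD_def SE_def F2_def by auto
    show "(SA \<union> SB \<union> SC) \<inter> (SD \<union> SE) = F2" unfolding SA_def SB_def SC_def SD_def SE_def F2_def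
      using p(3) by auto
  qed
  have c1: "card SA + card SB = card (SA \<union> SB) + card F1" using card_Un_Int[OF fins(1,2)] e1 by simp
  have c2: "card (SA \<union> SB) + card SC = card (SA \<union> SB \<union> SC) + card F1"
    using card_Un_Int[of "SA \<union> SB" SC] fins e1 by simp
  have c3: "card SD + card SE = card (SD \<union> SE) + card F2" using card_Un_Int[OF fins(4,5)] e1 by simp
  have c4: "card (SA \<union> SB \<union> SC) + card (SD \<union> SE) = card U + card F2"
    using card_Un_Int[of "SA \<union> SB \<union> SC" "SD \<union> SE"] fins e1 unfolding U_def by simp
  have dc: "dist_cols ?V grid_E k = Col n k - U"
  proof -
    have "dist_cols ?V grid_E k = {c \<in> Col n k. \<not> (fx ?V c (r2 n) \<or> fx ?V c (hh n) \<or> fx ?V c (vv n) \<or> fx ?V c dd \<or> fx ?V c (de n))}"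
      unfolding dist_cols_def using dist_iff[OF n] by simp
    also have "\<dots> = Col n k - U" unfolding U_def SA_def SB_def SC_def SD_def SE_def by blast
    finally show ?thesis .
  qed
  have UC: "U \<subseteq> Col n k" unfolding U_def SA_def SB_def SC_def SD_def SE_def by auto
  have cC: "card (Col n k) = k ^ (n * n)" using finite_gV by (simp add: card_PiE card_gV)
  have "card (dist_cols ?V grid_E k) + card U = k ^ (n * n)"
    using dc UC cC finC card_Diff_subset[OF finite_subset[OF UC finC] UC] card_mono[OF finC UC] by simp
  moreover have "8 * Phi k ?V grid_E = card (dist_cols ?V grid_E k)"
    using Phi_mult[OF finite_gV, of n grid_E k] card_Aut[OF n] by simp
  moreover have "card SA = k ^ ((n * n + 1) div 2)" unfolding SA_def by (rule card_A)
  moreover have "card SB = k ^ (n * ((n+1) div 2))" unfolding SB_def by (rule card_B)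
  moreover have "card SC = k ^ (n * ((n+1) div 2))" unfolding SC_def by (rule card_C)
  moreover have "card SD = k ^ (n * (n + 1) div 2)" unfolding SD_def by (rule card_D)
  moreover have "card SE = k ^ (n * (n + 1) div 2)" unfolding SE_def by (rule card_E)
  moreover have "card F1 = k ^ (((n+1) div 2)^2)" unfolding F1_def by (rule card_F1)
  moreover have "card F2 = k ^ (((n+1) div 2) * ((n+2) div 2))" unfolding F2_def by (rule card_F2)
  ultimately show ?thesis using c1 c2 c3 c4 by linarith
qed

theorem theorem5p2:
  fixes n k :: nat
  assumes "n \<ge> 3" and "k \<ge> 2"
  shows "real (Phi k (grid_V n) grid_E) =
    (1/8) * ( real k ^ (n^2)
            - real k ^ nat \<lceil>real (n^2) / 2\<rceil>
            - 2 * real k ^ (n * nat \<lceil>real n / 2\<rceil>)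
            - 2 * real k ^ (n * (n + 1) div 2)
            + 2 * real k ^ (nat \<lceil>real n / 2\<rceil> ^ 2)
            + 2 * real k ^ (nat \<lceil>real n / 2\<rceil> * nat \<lceil>real (n + 1) / 2\<rceil>))"
proof -
  have m: "8 * Phi k (grid_V n) grid_E + (k ^ ((n * n + 1) div 2) + 2 * k ^ (n * ((n+1) div 2))
          + 2 * k ^ (n * (n + 1) div 2))
       = k ^ (n * n) + 2 * k ^ (((n+1) div 2)^2) + 2 * k ^ (((n+1) div 2) * ((n+2) div 2))"
    using count_main[OF assms(1)] .
  have r: "8 * real (Phi k (grid_V n) grid_E) + (real k ^ ((n * n + 1) div 2) + 2 * real k ^ (n * ((n+1) div 2))
          + 2 * real k ^ (n * (n + 1) div 2))
       = real k ^ (n * n) + 2 * real k ^ (((n+1) div 2)^2) + 2 * real k ^ (((n+1) div 2) * ((n+2) div 2))"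
    using arg_cong[OF m, of real] by simp
  have ce: "nat \<lceil>real (n^2) / 2\<rceil> = (n * n + 1) div 2" "nat \<lceil>real n / 2\<rceil> = (n + 1) div 2"
    "nat \<lceil>real (n + 1) / 2\<rceil> = (n + 2) div 2"
    using ceil2[of "n^2"] ceil2[of n] ceil2[of "n+1"] by (simp_all add: power2_eq_square)
  show ?thesis unfolding ce using r by (simp add: power2_eq_square)
qed

end
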